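(* Let $\lambda,\sigma_1,\sigma_2\in\mathbb{C}^*$ and $\eta_1,\eta_2\in\mathbb{C}$. Let $V$ be the subspace of $\Omega(\lambda,\eta_1,\sigma_1,0)\otimes\Omega(\lambda,\eta_2,0,\sigma_2)$ spanned by $\{\sum_{t=0}^{j}\binom{j}{t}X^iY^{j-t}\otimes S^kT^t\mid i,j,k\in\mathbb{N}\}$, which is a proper subspace. Then $V$ is a minimal proper $\mathcal{G}$-submodule of $\Omega(\lambda,\eta_1,\sigma_1,0)\otimes\Omega(\lambda,\eta_2,0,\sigma_2)$ (i.e. $V$ is a nonzero proper submodule containing no nonzero proper submodule).
   Context: The planar Galilean conformal algebra $\mathcal{G}$ is the complex Lie algebra with basis $\{L_m,H_m,I_m,J_m\mid m\in\mathbb{Z}\}$ and brackets $[L_m,L_n]=(n-m)L_{m+n}$, $[L_m,H_n]=nH_{m+n}$, $[L_m,I_n]=(n-m)I_{m+n}$, $[L_m,J_n]=(n-m)J_{m+n}$, $[H_m,I_n]=I_{m+n}$, $[H_m,J_n]=-J_{m+n}$, and $[H_m,H_n]=[I_m,I_n]=[J_m,J_n]=[I_m,J_n]=0$ for all $m,n\in\mathbb{Z}$. For $\lambda,\sigma\in\mathbb{C}^*$, $\eta\in\mathbb{C}$, the module $\Omega(\lambda,\eta,\sigma,0)$ is $\mathbb{C}[X,Y]$ with $L_m f(X,Y)=\lambda^m(Y-mX+m\eta)f(X,Y-m)$, $H_m f(X,Y)=\lambda^m X f(X,Y-m)$, $I_m f(X,Y)=\lambda^m\sigma f(X-1,Y-m)$,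 $J_m f(X,Y)=0$. The module $\Omega(\lambda,\eta,0,\sigma)$ is $\mathbb{C}[S,T]$ with $L_m f(S,T)=\lambda^m(T+mS+m\eta)f(S,T-m)$, $H_m f(S,T)=\lambda^m S f(S,T-m)$, $I_m f(S,T)=0$, $J_m f(S,T)=\lambda^m\sigma f(S+1,T-m)$. The tensor product of $\mathcal{G}$-modules has action $x(v\otimes w)=xv\otimes w+v\otimes xw$. $\mathbb{N}$ denotes the non-negative integers. *)

theory Defs
  imports "HOL-Computational_Algebra.Polynomial"
begin

text \<open>The tensor product C[X,Y] (x) C[S,T] is identified with the polynomial ring
C[X,Y,S,T] via X^i Y^j (x) S^k T^l = X^i Y^j S^k T^l.  It is realised as nested
univariate polynomials: innermost variable X, then Y, then S, outermost T.\<close>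

type_synonym P4 = "complex poly poly poly poly"

definition C4 :: "complex \<Rightarrow> P4" where "C4 c = [:[:[:[:c:]:]:]:]"
definition vX :: P4 where "vX = [:[:[:[:0, 1:]:]:]:]"
definition vY :: P4 where "vY = [:[:[:0, 1:]:]:]"
definition vS :: P4 where "vS = [:[:0, 1:]:]"
definition vT :: P4 where "vT = [:0, 1:]"

definition shX :: "P4 \<Rightarrow> P4" where
  "shX F = map_poly (map_poly (map_poly (\<lambda>c. pcompose c [:-1, 1:]))) F"
definition shY :: "int \<Rightarrow> P4 \<Rightarrow> P4" where
  "shY m F = map_poly (map_poly (\<lambda>c. pcompose c [:- of_int m, 1:])) F"
definition shS :: "P4 \<Rightarrow> P4" where
  "shS F = map_poly (\<lambda>c. pcompose c [:1, 1:]) F"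
definition shT :: "int \<Rightarrow> P4 \<Rightarrow> P4" where
  "shT m F = pcompose F [:- of_int m, 1:]"

datatype gbasis = L int | H int | I int | J int

text \<open>Action of the basis elements on
  Omega(lam,eta1,sig1,0) (x) Omega(lam,eta2,0,sig2), i.e. x(v (x) w) = xv (x) w + v (x) xw,
  extended linearly.\<close>
fun act :: "complex \<Rightarrow> complex \<Rightarrow> complex \<Rightarrow> complex \<Rightarrow> complex \<Rightarrow> gbasis \<Rightarrow> P4 \<Rightarrow> P4" where
  "act lam eta1 sig1 eta2 sig2 (L m) F =
     C4 (lam powi m) * ((vY - of_int m * vX + C4 (of_int m * eta1)) * shY m F
                      + (vT + of_int m * vS + C4 (of_int m * eta2)) * shT m F)"
| "act lam eta1 sig1 eta2 sig2 (H m) F =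
     C4 (lam powi m) * (vX * shY m F + vS * shT m F)"
| "act lam eta1 sig1 eta2 sig2 (I m) F =
     C4 (lam powi m * sig1) * shX (shY m F)"
| "act lam eta1 sig1 eta2 sig2 (J m) F =
     C4 (lam powi m * sig2) * shS (shT m F)"

definition is_subspace :: "P4 set \<Rightarrow> bool" where
  "is_subspace W \<longleftrightarrow> 0 \<in> W \<and> (\<forall>u\<in>W. \<forall>v\<in>W. u + v \<in> W) \<and> (\<forall>c. \<forall>u\<in>W. C4 c * u \<in> W)"

definition is_submodule ::
  "complex \<Rightarrow> complex \<Rightarrow> complex \<Rightarrow> complex \<Rightarrow> complex \<Rightarrow> P4 set \<Rightarrow> bool" where
  "is_submodule lam eta1 sig1 eta2 sig2 W \<longleftrightarrow>
     is_subspace W \<and> (\<forall>x. \<forall>u\<in>W. act lam eta1 sig1 eta2 sig2 x u \<in> W)"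

definition gen :: "nat \<Rightarrow> nat \<Rightarrow> nat \<Rightarrow> P4" where
  "gen i j k = (\<Sum>t = 0..j. of_nat (j choose t) * vX ^ i * vY ^ (j - t) * vS ^ k * vT ^ t)"

definition Vsub :: "P4 set" where
  "Vsub = is_subspace hull {gen i j k | i j k. True}"

end

theory Submission imports Defs begin

lemma map_poly_hom_add:
  assumes "g 0 = 0" "\<And>a b. g (a + b) = g a + g b"
  shows "map_poly g (p + q) = map_poly g p + map_poly g q"
  by (rule poly_eqI) (simp add: coeff_map_poly assms)

lemma map_poly_hom_mult:
  fixes g :: "'a::comm_semiring_1 \<Rightarrow> 'b::comm_semiring_1"
  assumes g0: "g 0 = 0" and ga: "\<And>a b. g (a + b) = g a + g b" and gm: "\<And>a b. g (a * b) = g a * g b"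
  shows "map_poly g (p * q) = map_poly g p * map_poly g q"
proof (induction p)
  case 0 then show ?case by simp
next
  case (pCons a p)
  have "map_poly g (pCons a p * q) = map_poly g (smult a q) + map_poly g (pCons 0 (p * q))"
    by (simp add: map_poly_hom_add[OF g0 ga])
  also have "\<dots> = smult (g a) (map_poly g q) + pCons 0 (map_poly g p * map_poly g q)"
    by (simp add: map_poly_smult[OF g0 gm] map_poly_pCons[of g, OF g0] pCons.IH g0)
  also have "\<dots> = map_poly g (pCons a p) * map_poly g q"
    by (simp add: map_poly_pCons[of g, OF g0])
  finally show ?case .
qed

lemma poly_map_hom:
  assumes g0: "g 0 = 0" and ga: "\<And>a b. g (a + b) = g a + g b" and gm: "\<And>a b. g (a * b) = g a * g b"
    and gz: "g z = z"
  shows "poly (map_poly g p) z = g (poly p z)"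
proof (induction p)
  case 0 then show ?case by (simp add: g0)
next
  case (pCons a p)
  then show ?case by (simp add: map_poly_pCons[of g, OF g0] ga gm gz)
qed

lemma hom_poly_map:
  assumes g0: "g 0 = 0" and ga: "\<And>a b. g (a + b) = g a + g b" and gm: "\<And>a b. g (a * b) = g a * g b"
  shows "g (poly p z) = poly (map_poly g p) (g z)"
proof (induction p)
  case 0 then show ?case by (simp add: g0)
next
  case (pCons a p)
  then show ?case by (simp add: map_poly_pCons[of g, OF g0] ga gm)
qed

lemma poly_zero_on_infinite:
  fixes p :: "'a::idom poly"
  assumes "infinite A" "\<And>a. a \<in> A \<Longrightarrow> poly p a = 0"
  shows "p = 0"
proof (rule ccontr)
  assume "p \<noteq> 0"
  then have "finite {x. poly p x = 0}" by (rule poly_roots_finite)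
  moreover have "A \<subseteq> {x. poly p x = 0}" using assms by auto
  ultimately show False using assms(1) finite_subset by blast
qed

lemma shift_periodic:
  fixes p :: "'a::{idom,ring_char_0} poly"
  assumes c: "c \<noteq> 0" and eq: "pcompose p [:c, 1:] = p"
  shows "degree p = 0"
proof -
  have per: "poly p (x + c) = poly p x" for x
    using arg_cong[OF eq, of "\<lambda>q. poly q x"] by (simp add: poly_pcompose add.commute)
  have n: "poly p (of_nat n * c) = poly p 0" for n
  proof (induction n)
    case (Suc n)
    have "poly p (of_nat (Suc n) * c) = poly p (of_nat n * c + c)" by (simp add: algebra_simps)
    also have "\<dots> = poly p (of_nat n * c)" by (rule per)
    finally show ?case using Suc by simp
  qed simp
  define q where "q = p - [:poly p 0:]"
  have "infinite (range (\<lambda>n::nat. of_nat n * c))"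
  proof (rule range_inj_infinite)
    show "inj (\<lambda>n::nat. of_nat n * c)" by (rule injI) (use c in simp)
  qed
  then have "q = 0"
    by (rule poly_zero_on_infinite) (auto simp: q_def n)
  then have "p = [:poly p 0:]" by (simp add: q_def)
  then show ?thesis by (metis degree_pCons_0)
qed

lemma shift_diff_degree:
  fixes p :: "'a::{idom,ring_char_0} poly"
  assumes c: "c \<noteq> 0" and d: "degree p > 0"
  shows "pcompose p [:c, 1:] - p \<noteq> 0 \<and> degree (pcompose p [:c, 1:] - p) < degree p"
proof
  show "pcompose p [:c, 1:] - p \<noteq> 0" using shift_periodic[OF c] d by auto
  let ?q = "pcompose p [:c, 1:]"
  have dq: "degree ?q = degree p" by (simp add: degree_pcompose)
  have lq: "lead_coeff ?q = lead_coeff p" by (simp add: lead_coeff_comp)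
  have le: "degree (?q - p) \<le> degree p" using degree_diff_le_max[of ?q p] dq by simp
  have "coeff (?q - p) (degree p) = 0" using lq dq by simp
  then show "degree (?q - p) < degree p"
    using le \<open>?q - p \<noteq> 0\<close> by (metis le_neq_implies_less leading_coeff_0_iff)
qed


definition ev :: "P4 \<Rightarrow> complex \<Rightarrow> complex \<Rightarrow> complex \<Rightarrow> complex \<Rightarrow> complex" where
  "ev F x y s t = poly (poly (poly (poly F [:[:[:t:]:]:]) [:[:s:]:]) [:y:]) x"

lemma ev_simps [simp]:
  "ev (F + G) x y s t = ev F x y s t + ev G x y s t"
  "ev (F - G) x y s t = ev F x y s t - ev G x y s t"
  "ev (- F) x y s t = - ev F x y s t"
  "ev (F * G) x y s t = ev F x y s t * ev G x y s t"
  "ev (F ^ n) x y s t = ev F x y s t ^ n"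
  "ev 0 x y s t = 0"
  "ev 1 x y s t = 1"
  "ev (of_nat k) x y s t = of_nat k"
  "ev (of_int i) x y s t = of_int i"
  "ev (C4 c) x y s t = c"
  "ev vX x y s t = x"
  "ev vY x y s t = y"
  "ev vS x y s t = s"
  "ev vT x y s t = t"
  by (simp_all add: ev_def C4_def vX_def vY_def vS_def vT_def poly_power)

lemma ev_sum [simp]: "ev (sum f A) x y s t = (\<Sum>a\<in>A. ev (f a) x y s t)"
  by (induction A rule: infinite_finite_induct) auto

lemma K3_shift: "([:[:[:t:]:]:] - of_int m :: complex poly poly poly) = [:[:[:t - of_int m:]:]:]"
  by (simp add: of_int_poly)
lemma K2_shift: "([:[:s:]:] - of_int m :: complex poly poly) = [:[:s - of_int m:]:]"
  by (simp add: of_int_poly)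
lemma K1_shift: "([:s:] - of_int m :: complex poly) = [:s - of_int m:]"
  by (simp add: of_int_poly)

lemma ev_shT [simp]: "ev (shT m F) x y s t = ev F x y s (t - of_int m)"
  by (simp add: ev_def shT_def poly_pcompose K3_shift)

lemma pc_hom:
  "pcompose 0 q = 0" "pcompose (a + b) q = pcompose a q + pcompose b q"
  "pcompose (a * b) q = pcompose a q * pcompose b q"
  by (simp_all add: pcompose_add pcompose_mult)

lemma ev_shS [simp]: "ev (shS F) x y s t = ev F x y (s + 1) t"
proof -
  let ?g = "\<lambda>c::complex poly poly poly. pcompose c [:1, 1:]"
  have "poly (shS F) [:[:[:t:]:]:] = ?g (poly F [:[:[:t:]:]:])"
    unfolding shS_def by (rule poly_map_hom) (simp_all add: pc_hom)
  moreover have "(1 + [:[:s:]:] :: complex poly poly) = [:[:s + 1:]:]"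
    by (simp add: one_pCons)
  ultimately show ?thesis by (simp add: ev_def poly_pcompose)
qed

lemma mp_hom:
  fixes h :: "'a::comm_semiring_1 \<Rightarrow> 'b::comm_semiring_1"
  assumes "h 0 = 0" "\<And>a b. h (a + b) = h a + h b" "\<And>a b. h (a * b) = h a * h b"
  shows "map_poly h 0 = 0" "map_poly h (p + q) = map_poly h p + map_poly h q"
    "map_poly h (p * q) = map_poly h p * map_poly h q"
  by (simp_all add: map_poly_hom_add[of h, OF assms(1,2)] map_poly_hom_mult[of h, OF assms])

lemma ev_shY [simp]: "ev (shY m F) x y s t = ev F x (y - of_int m) s t"
proof -
  let ?h = "\<lambda>c::complex poly poly. pcompose c [:- of_int m, 1:]"
  have h: "?h 0 = 0" "\<And>a b. ?h (a + b) = ?h a + ?h b" "\<And>a b. ?h (a * b) = ?h a * ?h b"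
    by (simp_all add: pc_hom)
  have "poly (shY m F) [:[:[:t:]:]:] = map_poly ?h (poly F [:[:[:t:]:]:])"
    unfolding shY_def by (rule poly_map_hom) (simp_all add: mp_hom[OF h] map_poly_pCons[of ?h, OF h(1)])
  moreover have "poly (map_poly ?h A) [:[:s:]:] = ?h (poly A [:[:s:]:])" for A
    by (rule poly_map_hom) (simp_all add: h)
  ultimately show ?thesis by (simp add: ev_def poly_pcompose K1_shift)
qed

lemma ev_shX [simp]: "ev (shX F) x y s t = ev F (x - 1) y s t"
proof -
  let ?k = "\<lambda>c::complex poly. pcompose c [:- 1, 1:]"
  have k: "?k 0 = 0" "\<And>a b. ?k (a + b) = ?k a + ?k b" "\<And>a b. ?k (a * b) = ?k a * ?k b"
    by (simp_all add: pc_hom)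
  have k2: "map_poly ?k 0 = 0" "\<And>a b. map_poly ?k (a + b) = map_poly ?k a + map_poly ?k b"
     "\<And>a b. map_poly ?k (a * b) = map_poly ?k a * map_poly ?k b"
    by (simp_all add: mp_hom[OF k])
  have "poly (shX F) [:[:[:t:]:]:] = map_poly (map_poly ?k) (poly F [:[:[:t:]:]:])"
    unfolding shX_def by (rule poly_map_hom) (simp_all add: mp_hom[OF k2] map_poly_pCons[of "map_poly ?k", OF k2(1)] map_poly_pCons[of ?k, OF k(1)])
  moreover have "poly (map_poly (map_poly ?k) A) [:[:s:]:] = map_poly ?k (poly A [:[:s:]:])" for A
    by (rule poly_map_hom) (simp_all add: k2 map_poly_pCons[of ?k, OF k(1)])
  moreover have "poly (map_poly ?k B) [:y:] = ?k (poly B [:y:])" for B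
    by (rule poly_map_hom) (simp_all add: k)
  ultimately show ?thesis by (simp add: ev_def poly_pcompose)
qed

lemma inf_range_const: "infinite (range (\<lambda>a::complex. [:a:] :: complex poly))"
  proof
  assume "finite (range (\<lambda>a::complex. [:a:] :: complex poly))"
  moreover have "inj (\<lambda>a::complex. [:a:] :: complex poly)" by (rule injI) simp
  ultimately have "finite (UNIV::complex set)" using finite_imageD by blast
  then show False using infinite_UNIV_char_0 by blast
qed
lemma inf_range_const2: "infinite (range (\<lambda>a::complex. [:[:a:]:] :: complex poly poly))"
  proof
  assume "finite (range (\<lambda>a::complex. [:[:a:]:] :: complex poly poly))"
  moreover have "inj (\<lambda>a::complex. [:[:a:]:] :: complex poly poly)" by (rule injI) simp
  ultimately have "finite (UNIV::complex set)" using finite_imageD by blast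
  then show False using infinite_UNIV_char_0 by blast
qed
lemma inf_range_const3: "infinite (range (\<lambda>a::complex. [:[:[:a:]:]:] :: complex poly poly poly))"
  proof
  assume "finite (range (\<lambda>a::complex. [:[:[:a:]:]:] :: complex poly poly poly))"
  moreover have "inj (\<lambda>a::complex. [:[:[:a:]:]:] :: complex poly poly poly)" by (rule injI) simp
  ultimately have "finite (UNIV::complex set)" using finite_imageD by blast
  then show False using infinite_UNIV_char_0 by blast
qed

lemma ev_zero:
  assumes "\<And>x y s t. ev F x y s t = 0"
  shows "F = 0"
proof -
  have "poly (poly (poly F [:[:[:t:]:]:]) [:[:s:]:]) [:y:] = 0" for t s y
    using assms[unfolded ev_def] by (simp add: poly_all_0_iff_0[symmetric])
  then have "poly (poly F [:[:[:t:]:]:]) [:[:s:]:] = 0" for t s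
    by (intro poly_zero_on_infinite[OF inf_range_const]) auto
  then have "poly F [:[:[:t:]:]:] = 0" for t
    by (intro poly_zero_on_infinite[OF inf_range_const2]) auto
  then show "F = 0"
    by (intro poly_zero_on_infinite[OF inf_range_const3]) auto
qed

lemma ev_eqI:
  assumes "\<And>x y s t. ev F x y s t = ev G x y s t"
  shows "F = G"
  using ev_zero[of "F - G"] assms by simp


type_synonym R3 = "complex poly poly poly"

definition ev3 :: "R3 \<Rightarrow> complex \<Rightarrow> complex \<Rightarrow> complex \<Rightarrow> complex" where
  "ev3 p x s u = poly (poly (poly p [:[:u:]:]) [:s:]) x"

definition K :: "complex \<Rightarrow> R3" where "K c = [:[:[:c:]:]:]"
definition X3 :: R3 where "X3 = [:[:[:0, 1:]:]:]"
definition S3 :: R3 where "S3 = [:[:0, 1:]:]"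
definition U3 :: R3 where "U3 = [:0, 1:]"
definition sU :: "complex \<Rightarrow> R3 \<Rightarrow> R3" where "sU a p = pcompose p [:[:[:a:]:], 1:]"
definition sS :: "R3 \<Rightarrow> R3" where "sS p = map_poly (\<lambda>c. pcompose c [:1, 1:]) p"
definition sX :: "R3 \<Rightarrow> R3" where "sX p = map_poly (map_poly (\<lambda>c. pcompose c [:-1, 1:])) p"

lemma ev3_simps [simp]:
  "ev3 (p + q) x s u = ev3 p x s u + ev3 q x s u"
  "ev3 (p - q) x s u = ev3 p x s u - ev3 q x s u"
  "ev3 (- p) x s u = - ev3 p x s u"
  "ev3 (p * q) x s u = ev3 p x s u * ev3 q x s u"
  "ev3 (p ^ n) x s u = ev3 p x s u ^ n"
  "ev3 0 x s u = 0"
  "ev3 1 x s u = 1"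
  "ev3 (K c) x s u = c"
  "ev3 X3 x s u = x"
  "ev3 S3 x s u = s"
  "ev3 U3 x s u = u"
  by (simp_all add: ev3_def K_def X3_def S3_def U3_def poly_power)

lemma ev3_sU [simp]: "ev3 (sU a p) x s u = ev3 p x s (a + u)"
  by (simp add: ev3_def sU_def poly_pcompose)

lemma ev3_sS [simp]: "ev3 (sS p) x s u = ev3 p x (s + 1) u"
proof -
  let ?g = "\<lambda>c::complex poly poly. pcompose c [:1, 1:]"
  have "poly (sS p) [:[:u:]:] = ?g (poly p [:[:u:]:])"
    unfolding sS_def by (rule poly_map_hom) (simp_all add: pc_hom)
  moreover have "(1 + [:s:] :: complex poly) = [:s + 1:]"
    by (simp add: one_pCons)
  ultimately show ?thesis by (simp add: ev3_def poly_pcompose)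
qed

lemma ev3_sX [simp]: "ev3 (sX p) x s u = ev3 p (x - 1) s u"
proof -
  let ?k = "\<lambda>c::complex poly. pcompose c [:- 1, 1:]"
  have k: "?k 0 = 0" "\<And>a b. ?k (a + b) = ?k a + ?k b" "\<And>a b. ?k (a * b) = ?k a * ?k b"
    by (simp_all add: pc_hom)
  have "poly (sX p) [:[:u:]:] = map_poly ?k (poly p [:[:u:]:])"
    unfolding sX_def by (rule poly_map_hom) (simp_all add: mp_hom[OF k] map_poly_pCons[of ?k, OF k(1)])
  moreover have "poly (map_poly ?k B) [:s:] = ?k (poly B [:s:])" for B
    by (rule poly_map_hom) (simp_all add: k)
  ultimately show ?thesis by (simp add: ev3_def poly_pcompose)
qed

definition E1 :: "complex poly \<Rightarrow> P4" where "E1 r = poly (map_poly C4 r) vX"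
definition E2 :: "complex poly poly \<Rightarrow> P4" where "E2 q = poly (map_poly E1 q) vS"
definition emb :: "R3 \<Rightarrow> P4" where "emb p = poly (map_poly E2 p) (vY + vT)"

lemma C4_0 [simp]: "C4 0 = 0" by (simp add: C4_def)
lemma E1_0 [simp]: "E1 0 = 0" by (simp add: E1_def)
lemma E2_0 [simp]: "E2 0 = 0" by (simp add: E2_def)

lemma ev_poly_hom:
  "ev (poly P z) x y s t = poly (map_poly (\<lambda>F. ev F x y s t) P) (ev z x y s t)"
  by (rule hom_poly_map) simp_all

lemma ev_E1 [simp]: "ev (E1 r) x y s t = poly r x"
  by (simp add: E1_def ev_poly_hom map_poly_map_poly o_def)

lemma ev_E2 [simp]: "ev (E2 q) x y s t = poly (poly q [:s:]) x"
proof -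
  have "ev (E2 q) x y s t = poly (map_poly (\<lambda>r. poly r x) q) ((\<lambda>r. poly r x) [:s:])"
    by (simp add: E2_def ev_poly_hom map_poly_map_poly o_def)
  also have "\<dots> = (\<lambda>r. poly r x) (poly q [:s:])"
    by (rule hom_poly_map[symmetric]) simp_all
  finally show ?thesis by simp
qed

lemma ev_emb [simp]: "ev (emb p) x y s t = ev3 p x s (y + t)"
proof -
  let ?G = "\<lambda>q. poly (poly q [:s:]) x"
  have "ev (emb p) x y s t = poly (map_poly ?G p) (?G [:[:y + t:]:])"
    by (simp add: emb_def ev_poly_hom map_poly_map_poly o_def)
  also have "\<dots> = ?G (poly p [:[:y + t:]:])"
    by (rule hom_poly_map[symmetric]) simp_all
  finally show ?thesis by (simp add: ev3_def)
qed

lemma is_subspace_Vsub: "is_subspace Vsub"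
  unfolding Vsub_def by (rule hull_in) (unfold is_subspace_def, blast)

lemma gen_eq: "gen i j k = vX ^ i * vS ^ k * (vY + vT) ^ j"
proof (rule ev_eqI)
  fix x y s t :: complex
  have "(y + t) ^ j = (\<Sum>n\<le>j. of_nat (j choose n) * t ^ n * y ^ (j - n))"
    using binomial_ring[of t y j] by (simp add: add.commute)
  then show "ev (gen i j k) x y s t = ev (vX ^ i * vS ^ k * (vY + vT) ^ j) x y s t"
    by (simp add: gen_def sum_distrib_left atLeast0AtMost mult_ac)
qed

lemma gen_emb: "gen i j k = emb (X3 ^ i * S3 ^ k * U3 ^ j)"
  by (rule ev_eqI) (simp add: gen_eq)

lemma E1_pCons: "E1 (pCons a r) = C4 a + vX * E1 r"
  by (simp add: E1_def map_poly_pCons)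
lemma E2_pCons: "E2 (pCons a q) = E1 a + vS * E2 q"
  by (simp add: E2_def map_poly_pCons)
lemma emb_pCons: "emb (pCons a p) = E2 a + (vY + vT) * emb p"
  by (simp add: emb_def map_poly_pCons)

lemma sub_add: "is_subspace W \<Longrightarrow> u \<in> W \<Longrightarrow> v \<in> W \<Longrightarrow> u + v \<in> W"
  by (simp add: is_subspace_def)
lemma sub_smul: "is_subspace W \<Longrightarrow> u \<in> W \<Longrightarrow> C4 c * u \<in> W"
  by (simp add: is_subspace_def)
lemma sub_0: "is_subspace W \<Longrightarrow> 0 \<in> W"
  by (simp add: is_subspace_def)
lemma sub_diff: "is_subspace W \<Longrightarrow> u \<in> W \<Longrightarrow> v \<in> W \<Longrightarrow> u - v \<in> W"
proof -
  assume W: "is_subspace W" "u \<in> W" "v \<in> W"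
  have "u - v = u + C4 (-1) * v" by (rule ev_eqI) simp
  then show ?thesis using W sub_add sub_smul by metis
qed

lemma emb_in_Vsub: "emb p \<in> Vsub"
proof -
  have V: "is_subspace Vsub" by (rule is_subspace_Vsub)
  have gV: "gen i j k \<in> Vsub" for i j k
    unfolding Vsub_def by (rule hull_inc) blast
  have a: "E1 r * vX ^ i * vS ^ k * (vY + vT) ^ j \<in> Vsub" for r i k j
  proof (induction r arbitrary: i)
    case 0 then show ?case using sub_0[OF V] by simp
  next
    case (pCons a r)
    have "E1 (pCons a r) * vX ^ i * vS ^ k * (vY + vT) ^ j
        = C4 a * gen i j k + E1 r * vX ^ Suc i * vS ^ k * (vY + vT) ^ j"
      by (simp add: E1_pCons gen_eq algebra_simps)
    then show ?case using pCons.IH gV sub_add[OF V] sub_smul[OF V] by metis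
  qed
  have b: "E2 q * vS ^ k * (vY + vT) ^ j \<in> Vsub" for q k j
  proof (induction q arbitrary: k)
    case 0 then show ?case using sub_0[OF V] by simp
  next
    case (pCons a q)
    have "E2 (pCons a q) * vS ^ k * (vY + vT) ^ j
        = E1 a * vX ^ 0 * vS ^ k * (vY + vT) ^ j + E2 q * vS ^ Suc k * (vY + vT) ^ j"
      by (simp add: E2_pCons algebra_simps)
    then show ?case using pCons.IH a sub_add[OF V] by metis
  qed
  have c: "emb p * (vY + vT) ^ j \<in> Vsub" for j
  proof (induction p arbitrary: j)
    case 0 then show ?case using sub_0[OF V] by (simp add: emb_def)
  next
    case (pCons a p)
    have "emb (pCons a p) * (vY + vT) ^ j
        = E2 a * vS ^ 0 * (vY + vT) ^ j + emb p * (vY + vT) ^ Suc j"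
      by (simp add: emb_pCons algebra_simps)
    then show ?case using pCons.IH b sub_add[OF V] by metis
  qed
  show ?thesis using c[of 0] by simp
qed

lemma Vsub_eq: "Vsub = range emb"
proof
  show "range emb \<subseteq> Vsub" using emb_in_Vsub by blast
  show "Vsub \<subseteq> range emb"
    unfolding Vsub_def
  proof (rule hull_minimal)
    show "{gen i j k |i j k. True} \<subseteq> range emb" using gen_emb by blast
    show "is_subspace (range emb)"
      unfolding is_subspace_def
    proof (intro conjI ballI allI)
      have "0 = emb 0" by (rule ev_eqI) simp
      then show "0 \<in> range emb" by blast
      fix u v assume "u \<in> range emb" "v \<in> range emb"
      then obtain p q where "u = emb p" "v = emb q" by blast
      then have "u + v = emb (p + q)" by (intro ev_eqI) simp
      then show "u + v \<in> range emb" by blast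
    next
      fix c u assume "u \<in> range emb"
      then obtain p where "u = emb p" by blast
      then have "C4 c * u = emb (K c * p)" by (intro ev_eqI) simp
      then show "C4 c * u \<in> range emb" by blast
    qed
  qed
qed

lemma act_Vsub:
  assumes "F \<in> Vsub"
  shows "act lam eta1 sig1 eta2 sig2 g F \<in> Vsub"
proof -
  obtain p where p: "F = emb p" using assms Vsub_eq by blast
  show ?thesis
  proof (cases g)
    case (L m)
    have "act lam eta1 sig1 eta2 sig2 g F = emb (K (lam powi m) * (U3 - K (of_int m) * X3 + K (of_int m) * S3
        + K (of_int m * (eta1 + eta2))) * sU (- of_int m) p)"
      by (rule ev_eqI) (simp add: p L algebra_simps)
    then show ?thesis using Vsub_eq by auto
  next
    case (H m)
    have "act lam eta1 sig1 eta2 sig2 g F = emb (K (lam powi m) * (X3 + S3) * sU (- of_int m) p)"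
      by (rule ev_eqI) (simp add: p H algebra_simps)
    then show ?thesis using Vsub_eq by auto
  next
    case (I m)
    have "act lam eta1 sig1 eta2 sig2 g F = emb (K (lam powi m * sig1) * sX (sU (- of_int m) p))"
      by (rule ev_eqI) (simp add: p I algebra_simps)
    then show ?thesis using Vsub_eq by auto
  next
    case (J m)
    have "act lam eta1 sig1 eta2 sig2 g F = emb (K (lam powi m * sig2) * sS (sU (- of_int m) p))"
      by (rule ev_eqI) (simp add: p J algebra_simps)
    then show ?thesis using Vsub_eq by auto
  qed
qed


lemma sub_act: "is_submodule lam eta1 sig1 eta2 sig2 W \<Longrightarrow> u \<in> W \<Longrightarrow> act lam eta1 sig1 eta2 sig2 g u \<in> W"
  by (simp add: is_submodule_def)

lemma stepX:
  assumes W: "is_submodule lam eta1 sig1 eta2 sig2 W" and s1: "sig1 \<noteq> 0"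
  shows "r \<noteq> 0 \<Longrightarrow> emb [:[:r:]:] \<in> W \<Longrightarrow> 1 \<in> W"
proof (induction "degree r" arbitrary: r rule: less_induct)
  case less
  have Ws: "is_subspace W" using W by (simp add: is_submodule_def)
  show ?case
  proof (cases "degree r = 0")
    case True
    then obtain c where r: "r = [:c:]" by (rule degree_eq_zeroE)
    with less.prems have c: "c \<noteq> 0" by simp
    have "1 = C4 (1 / c) * emb [:[:r:]:]" by (rule ev_eqI) (simp add: r ev3_def c)
    then show ?thesis using sub_smul[OF Ws less.prems(2)] by metis
  next
    case False
    let ?r = "pcompose r [:-1, 1:] - r"
    have d: "?r \<noteq> 0" "degree ?r < degree r" using shift_diff_degree[of "-1" r] False by auto
    have "emb [:[:?r:]:] = C4 (1 / sig1) * act lam eta1 sig1 eta2 sig2 (I 0) (emb [:[:r:]:]) - emb [:[:r:]:]"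
      by (rule ev_eqI) (simp add: ev3_def poly_pcompose s1 algebra_simps)
    moreover have "\<dots> \<in> W"
      by (intro sub_diff[OF Ws] sub_smul[OF Ws] sub_act[OF W] less.prems)
    ultimately show ?thesis using less.hyps[OF d(2) d(1)] by simp
  qed
qed

lemma stepS:
  assumes W: "is_submodule lam eta1 sig1 eta2 sig2 W" and s1: "sig1 \<noteq> 0" and s2: "sig2 \<noteq> 0"
  shows "q \<noteq> 0 \<Longrightarrow> emb [:q:] \<in> W \<Longrightarrow> 1 \<in> W"
proof (induction "degree q" arbitrary: q rule: less_induct)
  case less
  have Ws: "is_subspace W" using W by (simp add: is_submodule_def)
  show ?case
  proof (cases "degree q = 0")
    case True
    then obtain r where q: "q = [:r:]" by (rule degree_eq_zeroE)
    with less.prems show ?thesis using stepX[OF W s1] by simp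
  next
    case False
    let ?q = "pcompose q [:1, 1:] - q"
    have d: "?q \<noteq> 0" "degree ?q < degree q" using shift_diff_degree[of "1" q] False by auto
    have one: "(1 + [:s:] :: complex poly) = [:s + 1:]" for s
      by (simp add: one_pCons)
    have "emb [:?q:] = C4 (1 / sig2) * act lam eta1 sig1 eta2 sig2 (J 0) (emb [:q:]) - emb [:q:]"
      by (rule ev_eqI) (simp add: ev3_def poly_pcompose s2 one)
    moreover have "\<dots> \<in> W"
      by (intro sub_diff[OF Ws] sub_smul[OF Ws] sub_act[OF W] less.prems)
    ultimately show ?thesis using less.hyps[OF d(2) d(1)] by simp
  qed
qed

lemma stepU:
  assumes W: "is_submodule lam eta1 sig1 eta2 sig2 W" and l: "lam \<noteq> 0"
    and s1: "sig1 \<noteq> 0" and s2: "sig2 \<noteq> 0"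
  shows "p \<noteq> 0 \<Longrightarrow> emb p \<in> W \<Longrightarrow> 1 \<in> W"
proof (induction "degree p" arbitrary: p rule: less_induct)
  case less
  have Ws: "is_subspace W" using W by (simp add: is_submodule_def)
  show ?case
  proof (cases "degree p = 0")
    case True
    then obtain q where p: "p = [:q:]" by (rule degree_eq_zeroE)
    with less.prems show ?thesis using stepS[OF W s1 s2] by simp
  next
    case False
    let ?d = "pcompose p [:[:[:-1:]:], 1:] - p"
    let ?p = "(X3 + S3) * ?d"
    have d: "?d \<noteq> 0" "degree ?d < degree p"
      using shift_diff_degree[of "[:[:-1:]:]" p] False by auto
    have sm: "(X3 + S3) * ?d = smult ([:[:0, 1:]:] + [:0, 1:]) ?d"
      by (simp add: X3_def S3_def)
    have nz: "([:[:0, 1:]:] + [:0, 1:] :: complex poly poly) \<noteq> 0" by simp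
    have d': "?p \<noteq> 0" "degree ?p < degree p" using d nz unfolding sm by auto
    have "emb ?p = C4 (1 / lam) * act lam eta1 sig1 eta2 sig2 (H 1) (emb p) - act lam eta1 sig1 eta2 sig2 (H 0) (emb p)"
    proof (rule ev_eqI)
      fix x y s t
      have e: "ev3 (pcompose p [:[:[:-1:]:], 1:]) x s u = ev3 p x s (u - 1)" for u
        using ev3_sU[of "-1" p x s u] by (simp add: sU_def)
      show "ev (emb ?p) x y s t = ev (C4 (1 / lam) * act lam eta1 sig1 eta2 sig2 (H 1) (emb p) - act lam eta1 sig1 eta2 sig2 (H 0) (emb p)) x y s t"
        by (simp add: e l algebra_simps)
    qed
    moreover have "\<dots> \<in> W"
      by (intro sub_diff[OF Ws] sub_smul[OF Ws] sub_act[OF W] less.prems)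
    ultimately show ?thesis using less.hyps[OF d'(2) d'(1)] by simp
  qed
qed

lemma generate:
  assumes W: "is_submodule lam eta1 sig1 eta2 sig2 W" and l: "lam \<noteq> 0" and one: "1 \<in> W"
  shows "Vsub \<subseteq> W"
proof -
  have Ws: "is_subspace W" using W by (simp add: is_submodule_def)
  have XS: "vX * (vX ^ a * vS ^ b) \<in> W \<and> vS * (vX ^ a * vS ^ b) \<in> W" if F: "vX ^ a * vS ^ b \<in> W" for a b
  proof -
    let ?F = "vX ^ a * vS ^ b"
    let ?A = "act lam eta1 sig1 eta2 sig2"
    have "vX * ?F = C4 (1/2) * (?A (H 0) ?F - C4 (1 / lam) * ?A (L 1) ?F + ?A (L 0) ?F + C4 (eta1 + eta2) * ?F)"
      by (rule ev_eqI) (simp add: l field_simps)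
    moreover have "vS * ?F = C4 (1/2) * (?A (H 0) ?F + C4 (1 / lam) * ?A (L 1) ?F - ?A (L 0) ?F - C4 (eta1 + eta2) * ?F)"
      by (rule ev_eqI) (simp add: l field_simps)
    moreover have "C4 (1/2) * (?A (H 0) ?F - C4 (1 / lam) * ?A (L 1) ?F + ?A (L 0) ?F + C4 (eta1 + eta2) * ?F) \<in> W"
      by (intro sub_add[OF Ws] sub_diff[OF Ws] sub_smul[OF Ws] sub_act[OF W] F)
    moreover have "C4 (1/2) * (?A (H 0) ?F + C4 (1 / lam) * ?A (L 1) ?F - ?A (L 0) ?F - C4 (eta1 + eta2) * ?F) \<in> W"
      by (intro sub_add[OF Ws] sub_diff[OF Ws] sub_smul[OF Ws] sub_act[OF W] F)
    ultimately show ?thesis by simp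
  qed
  have mon: "vX ^ a * vS ^ b \<in> W" for a b
  proof (induction a)
    case 0
    show ?case
    proof (induction b)
      case 0 then show ?case using one by simp
    next
      case (Suc b)
      then show ?case using XS[of 0 b] by (simp add: mult_ac)
    qed
  next
    case (Suc a)
    then show ?case using XS[of a b] by (simp add: mult_ac)
  qed
  have monU: "(vY + vT) ^ j * (vX ^ a * vS ^ b) \<in> W" for a b j
  proof (induction j)
    case 0 then show ?case using mon by simp
  next
    case (Suc j)
    have "(vY + vT) ^ Suc j * (vX ^ a * vS ^ b) = act lam eta1 sig1 eta2 sig2 (L 0) ((vY + vT) ^ j * (vX ^ a * vS ^ b))"
      by (rule ev_eqI) (simp add: algebra_simps)
    then show ?case using sub_act[OF W Suc, of "L 0"] by metis
  qed
  show ?thesis unfolding Vsub_def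
  proof (rule hull_minimal)
    show "is_subspace W" by (rule Ws)
    show "{gen i j k |i j k. True} \<subseteq> W"
      using monU by (auto simp: gen_eq mult_ac)
  qed
qed

theorem proposition3p3:
  fixes lam sig1 sig2 eta1 eta2 :: complex
  assumes "lam \<noteq> 0" and "sig1 \<noteq> 0" and "sig2 \<noteq> 0"
  shows "is_submodule lam eta1 sig1 eta2 sig2 Vsub \<and> Vsub \<noteq> {0} \<and> Vsub \<noteq> UNIV \<and>
         (\<forall>W. is_submodule lam eta1 sig1 eta2 sig2 W \<and> W \<subseteq> Vsub \<and> W \<noteq> {0} \<longrightarrow> W = Vsub)"
proof (intro conjI allI impI)
  show "is_submodule lam eta1 sig1 eta2 sig2 Vsub"
    unfolding is_submodule_def using is_subspace_Vsub act_Vsub by blast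
  have g: "gen 0 0 0 \<in> Vsub" unfolding Vsub_def by (rule hull_inc) blast
  have "gen 0 0 0 = 1" by (simp add: gen_eq)
  then show "Vsub \<noteq> {0}" using g by (metis singletonD one_neq_zero)
  show "Vsub \<noteq> UNIV"
  proof
    assume "Vsub = UNIV"
    then obtain p where p: "vY = emb p" using Vsub_eq by (metis UNIV_I imageE)
    have "ev vY 0 1 0 (-1) = ev vY 0 0 0 0" unfolding p by simp
    then show False by simp
  qed
next
  fix W assume A: "is_submodule lam eta1 sig1 eta2 sig2 W \<and> W \<subseteq> Vsub \<and> W \<noteq> {0}"
  then have W: "is_submodule lam eta1 sig1 eta2 sig2 W" and sub: "W \<subseteq> Vsub" and nz: "W \<noteq> {0}" by auto
  have Ws: "is_subspace W" using W by (simp add: is_submodule_def)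
  obtain F where F: "F \<in> W" "F \<noteq> 0" using nz sub_0[OF Ws] by blast
  then obtain p where p: "F = emb p" using sub Vsub_eq by blast
  have "p \<noteq> 0" using F p by (auto simp: emb_def)
  then have "1 \<in> W" using stepU[OF W assms] F p by blast
  then have "Vsub \<subseteq> W" using generate[OF W assms(1)] by blast
  then show "W = Vsub" using sub by blast
qed

end
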